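(* Let $\Sigma$ be a polynomial orbit-finite set, $M$ an orbit-finite monoid and $h:\Sigma^*\to M$ an equivariant homomorphism satisfying ( * ): every $x\in M$ has a letter representation. Then there is an equivariant function $g:\Sigma\times\Sigma\to\Sigma$ such that for all $a,b\in\Sigma$, $g(a,b)$ is a letter representation of $h(ab)$.
   Context: Atoms $\mathbb A$ are a countably infinite set; atom automorphisms are its bijections; polynomial orbit-finite sets are built from $\mathbb A$ and singletons by finite products and disjoint unions. $x$ is supported by $\bar a$ if every automorphism fixing $\bar a$ pointwise fixes $x$; equivariant means supported by the empty tuple (for functions: $f(\pi x)=\pi f(x)$). The least support of $x$ is the non-repeating tuple supporting $x$ whose atoms occur in every tuple supporting $x$. An orbit-finite monoid has an orbit-finite underlying set (elements finitely supported, finitely many orbits of the automorphisms fixing some tuple) and finitely supported multiplication. A letter representation of $x\in M$ is a letter $a\in\Sigma$ with $h(a)=x$ and the same least support as $x$. *)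

theory Defs
  imports Main
begin

text \<open>Atoms are the natural numbers (a countably infinite set); atom automorphisms
are arbitrary bijections of the atoms.\<close>

type_synonym atom = nat

definition fixes_tuple :: "(atom \<Rightarrow> atom) \<Rightarrow> atom list \<Rightarrow> bool" where
  "fixes_tuple \<pi> as \<longleftrightarrow> bij \<pi> \<and> (\<forall>a\<in>set as. \<pi> a = a)"

definition is_action :: "((atom \<Rightarrow> atom) \<Rightarrow> 'x \<Rightarrow> 'x) \<Rightarrow> bool" where
  "is_action act \<longleftrightarrow> (\<forall>x. act id x = x) \<and>
     (\<forall>\<pi> \<sigma> x. bij \<pi> \<longrightarrow> bij \<sigma> \<longrightarrow> act (\<pi> \<circ> \<sigma>) x = act \<pi> (act \<sigma> x))"

definition supports :: "((atom \<Rightarrow> atom) \<Rightarrow> 'x \<Rightarrow> 'x) \<Rightarrow> atom list \<Rightarrow> 'x \<Rightarrow> bool" where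
  "supports act as x \<longleftrightarrow> (\<forall>\<pi>. fixes_tuple \<pi> as \<longrightarrow> act \<pi> x = x)"

definition fin_supp :: "((atom \<Rightarrow> atom) \<Rightarrow> 'x \<Rightarrow> 'x) \<Rightarrow> 'x \<Rightarrow> bool" where
  "fin_supp act x \<longleftrightarrow> (\<exists>as. supports act as x)"

definition is_least_supp :: "((atom \<Rightarrow> atom) \<Rightarrow> 'x \<Rightarrow> 'x) \<Rightarrow> 'x \<Rightarrow> atom list \<Rightarrow> bool" where
  "is_least_supp act x as \<longleftrightarrow> distinct as \<and> supports act as x \<and>
     (\<forall>bs. supports act bs x \<longrightarrow> set as \<subseteq> set bs)"

datatype poly = PAtoms | PUnit | PProd poly poly | PSum poly poly

datatype val = VAtom atom | VUnit | VPair val val | VInl val | VInr val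

fun in_poly :: "val \<Rightarrow> poly \<Rightarrow> bool" where
  "in_poly (VAtom a) PAtoms = True"
| "in_poly VUnit PUnit = True"
| "in_poly (VPair u v) (PProd p q) = (in_poly u p \<and> in_poly v q)"
| "in_poly (VInl u) (PSum p q) = in_poly u p"
| "in_poly (VInr v) (PSum p q) = in_poly v q"
| "in_poly _ _ = False"

definition poly_set :: "poly \<Rightarrow> val set" where
  "poly_set p = {v. in_poly v p}"

fun vact :: "(atom \<Rightarrow> atom) \<Rightarrow> val \<Rightarrow> val" where
  "vact \<pi> (VAtom a) = VAtom (\<pi> a)"
| "vact \<pi> VUnit = VUnit"
| "vact \<pi> (VPair u v) = VPair (vact \<pi> u) (vact \<pi> v)"
| "vact \<pi> (VInl u) = VInl (vact \<pi> u)"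
| "vact \<pi> (VInr u) = VInr (vact \<pi> u)"

definition orbit_finite :: "((atom \<Rightarrow> atom) \<Rightarrow> 'x \<Rightarrow> 'x) \<Rightarrow> 'x set \<Rightarrow> bool" where
  "orbit_finite act X \<longleftrightarrow> (\<forall>x\<in>X. fin_supp act x) \<and>
     (\<exists>as. (\<forall>\<pi> x. fixes_tuple \<pi> as \<longrightarrow> x \<in> X \<longrightarrow> act \<pi> x \<in> X) \<and>
           finite ((\<lambda>x. {act \<pi> x | \<pi>. fixes_tuple \<pi> as}) ` X))"

definition monoid_on :: "'x set \<Rightarrow> ('x \<Rightarrow> 'x \<Rightarrow> 'x) \<Rightarrow> 'x \<Rightarrow> bool" where
  "monoid_on M mult e \<longleftrightarrow> e \<in> M \<and> (\<forall>x\<in>M. \<forall>y\<in>M. mult x y \<in> M) \<and>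
     (\<forall>x\<in>M. \<forall>y\<in>M. \<forall>z\<in>M. mult (mult x y) z = mult x (mult y z)) \<and>
     (\<forall>x\<in>M. mult e x = x \<and> mult x e = x)"

definition orbit_finite_monoid ::
  "((atom \<Rightarrow> atom) \<Rightarrow> 'x \<Rightarrow> 'x) \<Rightarrow> 'x set \<Rightarrow> ('x \<Rightarrow> 'x \<Rightarrow> 'x) \<Rightarrow> 'x \<Rightarrow> bool" where
  "orbit_finite_monoid act M mult e \<longleftrightarrow> is_action act \<and> monoid_on M mult e \<and>
     orbit_finite act M \<and>
     (\<exists>as. \<forall>\<pi>. fixes_tuple \<pi> as \<longrightarrow>
        (\<forall>x\<in>M. \<forall>y\<in>M. act \<pi> (mult x y) = mult (act \<pi> x) (act \<pi> y)))"

definition equivariant_hom ::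
  "poly \<Rightarrow> ((atom \<Rightarrow> atom) \<Rightarrow> 'x \<Rightarrow> 'x) \<Rightarrow> 'x set \<Rightarrow> ('x \<Rightarrow> 'x \<Rightarrow> 'x) \<Rightarrow> 'x
    \<Rightarrow> (val list \<Rightarrow> 'x) \<Rightarrow> bool" where
  "equivariant_hom \<Sigma> act M mult e h \<longleftrightarrow>
     (\<forall>w. set w \<subseteq> poly_set \<Sigma> \<longrightarrow> h w \<in> M) \<and>
     h [] = e \<and>
     (\<forall>u v. set u \<subseteq> poly_set \<Sigma> \<longrightarrow> set v \<subseteq> poly_set \<Sigma> \<longrightarrow> h (u @ v) = mult (h u) (h v)) \<and>
     (\<forall>\<pi> w. bij \<pi> \<longrightarrow> set w \<subseteq> poly_set \<Sigma> \<longrightarrow> h (map (vact \<pi>) w) = act \<pi> (h w))"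

definition letter_rep ::
  "poly \<Rightarrow> ((atom \<Rightarrow> atom) \<Rightarrow> 'x \<Rightarrow> 'x) \<Rightarrow> (val list \<Rightarrow> 'x) \<Rightarrow> val \<Rightarrow> 'x \<Rightarrow> bool" where
  "letter_rep \<Sigma> act h a x \<longleftrightarrow> a \<in> poly_set \<Sigma> \<and> h [a] = x \<and>
     (\<exists>as. is_least_supp vact a as \<and> is_least_supp act x as)"

end

theory Submission
  imports Defs
begin

lemma vact_id[simp]: "vact id v = v"
  by (induction v) auto

lemma vact_comp: "vact (\<pi> \<circ> \<sigma>) v = vact \<pi> (vact \<sigma> v)"
  by (induction v) auto

lemma in_poly_vact[simp]: "in_poly (vact \<pi> v) p = in_poly v p"
  by (induction v arbitrary: p) (case_tac p; simp)+

lemma poly_set_vact[simp]: "(vact \<pi> v \<in> poly_set p) = (v \<in> poly_set p)"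
  by (simp add: poly_set_def)

fun atl :: "val \<Rightarrow> atom list" where
  "atl (VAtom a) = [a]"
| "atl VUnit = []"
| "atl (VPair u v) = atl u @ atl v"
| "atl (VInl u) = atl u"
| "atl (VInr u) = atl u"

lemma vact_fix: "(vact \<tau> v = v) = (\<forall>a\<in>set (atl v). \<tau> a = a)"
  by (induction v) auto

lemma vact_action: "is_action vact"
  by (simp add: is_action_def vact_comp)

lemma act_inv1:
  assumes "is_action act" "bij \<sigma>" shows "act (inv \<sigma>) (act \<sigma> x) = x"
proof -
  have "bij (inv \<sigma>)" using assms(2) by (simp add: bij_imp_bij_inv)
  hence 1: "act (inv \<sigma>) (act \<sigma> x) = act (inv \<sigma> \<circ> \<sigma>) x" using assms by (simp add: is_action_def)
  have 2: "inv \<sigma> \<circ> \<sigma> = id" using assms(2) by (simp add: bij_is_inj)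
  have 3: "act id x = x" using assms(1) unfolding is_action_def by blast
  show ?thesis using 1 2 3 by simp
qed

lemma supports_transport:
  assumes A: "is_action act" and B: "bij \<sigma>" and S: "supports act as x"
  shows "supports act (map \<sigma> as) (act \<sigma> x)"
  unfolding supports_def
proof (intro allI impI)
  fix \<tau> assume T: "fixes_tuple \<tau> (map \<sigma> as)"
  define \<rho> where "\<rho> = inv \<sigma> \<circ> \<tau> \<circ> \<sigma>"
  have bt: "bij \<tau>" using T by (simp add: fixes_tuple_def)
  have bi: "bij (inv \<sigma>)" using B by (simp add: bij_imp_bij_inv)
  have br: "bij \<rho>" unfolding \<rho>_def using bt bi B by (simp add: bij_comp)
  have "\<forall>a\<in>set as. \<rho> a = a" unfolding \<rho>_def using T B
    by (auto simp: fixes_tuple_def bij_is_inj)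
  hence r: "act \<rho> x = x" using S br by (simp add: supports_def fixes_tuple_def)
  have "\<sigma> \<circ> \<rho> = \<tau> \<circ> \<sigma>" unfolding \<rho>_def using B
    by (auto simp: fun_eq_iff bij_is_surj surj_f_inv_f)
  hence "act (\<tau> \<circ> \<sigma>) x = act (\<sigma> \<circ> \<rho>) x" by simp
  thus "act \<tau> (act \<sigma> x) = act \<sigma> x" using A B bt br r by (simp add: is_action_def)
qed

lemma least_transport:
  assumes A: "is_action act" and B: "bij \<sigma>" and L: "is_least_supp act x as"
  shows "is_least_supp act (act \<sigma> x) (map \<sigma> as)"
  unfolding is_least_supp_def
proof (intro conjI allI impI)
  show "distinct (map \<sigma> as)" using L B
    by (metis L B is_least_supp_def distinct_map bij_is_inj inj_on_subset subset_UNIV)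
  show "supports act (map \<sigma> as) (act \<sigma> x)" using L A B supports_transport
    by (auto simp: is_least_supp_def)
  fix bs assume "supports act bs (act \<sigma> x)"
  hence "supports act (map (inv \<sigma>) bs) (act (inv \<sigma>) (act \<sigma> x))"
    using supports_transport[OF A bij_imp_bij_inv[OF B]] by blast
  hence "supports act (map (inv \<sigma>) bs) x" using act_inv1[OF A B] by simp
  hence "set as \<subseteq> inv \<sigma> ` set bs" using L unfolding is_least_supp_def by (metis set_map)
  hence "\<sigma> ` set as \<subseteq> \<sigma> ` inv \<sigma> ` set bs" by blast
  also have "\<dots> = set bs" using B by (simp add: image_comp bij_is_surj surj_f_inv_f)
  finally show "set (map \<sigma> as) \<subseteq> set bs" by simp
qed

definition pact :: "(atom \<Rightarrow> atom) \<Rightarrow> val \<times> val \<Rightarrow> val \<times> val" where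
  "pact \<pi> p = (vact \<pi> (fst p), vact \<pi> (snd p))"

lemma pact_comp: "pact (\<pi> \<circ> \<sigma>) p = pact \<pi> (pact \<sigma> p)"
  by (simp add: pact_def vact_comp)

definition orb :: "val \<times> val \<Rightarrow> (val \<times> val) set" where
  "orb p = {pact \<sigma> p | \<sigma>. bij \<sigma>}"

lemma orb_self: "p \<in> orb p"
  unfolding orb_def by (rule CollectI, rule exI[of _ id]) (simp add: pact_def)

lemma orb_shift: assumes "bij \<pi>" shows "orb (pact \<pi> p) = orb p"
proof
  show "orb (pact \<pi> p) \<subseteq> orb p"
    unfolding orb_def using assms by (auto simp: pact_comp[symmetric] intro: bij_comp)
  show "orb p \<subseteq> orb (pact \<pi> p)"
  proof
    fix q assume "q \<in> orb p"
    then obtain \<sigma> where s: "bij \<sigma>" "q = pact \<sigma> p" by (auto simp: orb_def)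
    have "\<sigma> \<circ> inv \<pi> \<circ> \<pi> = \<sigma>" using assms by (auto simp: fun_eq_iff bij_is_inj)
    hence "q = pact (\<sigma> \<circ> inv \<pi>) (pact \<pi> p)" using s by (metis pact_comp)
    moreover have "bij (\<sigma> \<circ> inv \<pi>)" using s assms by (simp add: bij_comp bij_imp_bij_inv)
    ultimately show "q \<in> orb (pact \<pi> p)" by (auto simp: orb_def)
  qed
qed

theorem mainTheorem14:
  fixes \<Sigma> :: poly
    and act :: "(atom \<Rightarrow> atom) \<Rightarrow> 'm \<Rightarrow> 'm"
    and M :: "'m set" and mult :: "'m \<Rightarrow> 'm \<Rightarrow> 'm" and e :: 'm
    and h :: "val list \<Rightarrow> 'm"
  assumes "orbit_finite_monoid act M mult e"
    and "equivariant_hom \<Sigma> act M mult e h"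
    and "\<forall>x\<in>M. \<exists>a. letter_rep \<Sigma> act h a x"
  shows "\<exists>g :: val \<times> val \<Rightarrow> val.
           (\<forall>a\<in>poly_set \<Sigma>. \<forall>b\<in>poly_set \<Sigma>. g (a, b) \<in> poly_set \<Sigma>) \<and>
           (\<forall>\<pi>. bij \<pi> \<longrightarrow> (\<forall>a\<in>poly_set \<Sigma>. \<forall>b\<in>poly_set \<Sigma>.
                g (vact \<pi> a, vact \<pi> b) = vact \<pi> (g (a, b)))) \<and>
           (\<forall>a\<in>poly_set \<Sigma>. \<forall>b\<in>poly_set \<Sigma>. letter_rep \<Sigma> act h (g (a, b)) (h [a, b]))"
proof -
  have A: "is_action act" using assms(1) by (simp add: orbit_finite_monoid_def)
  note H = assms(2)[unfolded equivariant_hom_def]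
  have Heq: "\<And>\<pi> w. bij \<pi> \<Longrightarrow> set w \<subseteq> poly_set \<Sigma> \<Longrightarrow> h (map (vact \<pi>) w) = act \<pi> (h w)"
    using H by (elim conjE) (simp only:)
  define S where "S = poly_set \<Sigma>"
  define r where "r p = (SOME q. q \<in> orb p)" for p
  define c where "c q = (SOME c. letter_rep \<Sigma> act h c (h [fst q, snd q]))" for q
  define g where "g p = vact (SOME \<sigma>. bij \<sigma> \<and> p = pact \<sigma> (r p)) (c (r p))" for p
  have r_orb: "r p \<in> orb p" for p unfolding r_def using orb_self by (metis someI)
  have r_shift: "bij \<pi> \<Longrightarrow> r (pact \<pi> p) = r p" for \<pi> p
    unfolding r_def by (simp add: orb_shift)
  have rsig: "\<exists>\<sigma>. bij \<sigma> \<and> p = pact \<sigma> (r p)" for p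
  proof -
    obtain \<sigma> where s: "bij \<sigma>" "r p = pact \<sigma> p" using r_orb[of p] by (auto simp: orb_def)
    have "inv \<sigma> \<circ> \<sigma> = id" using s by (simp add: bij_is_inj)
    hence "p = pact (inv \<sigma>) (r p)" using s by (metis pact_comp pact_def prod.collapse vact_id)
    thus ?thesis using s bij_imp_bij_inv by blast
  qed
  have rS: "fst p \<in> S \<Longrightarrow> snd p \<in> S \<Longrightarrow> fst (r p) \<in> S \<and> snd (r p) \<in> S" for p
    using r_orb[of p] by (auto simp: orb_def pact_def S_def)
  have c_rep: "fst q \<in> S \<Longrightarrow> snd q \<in> S \<Longrightarrow> letter_rep \<Sigma> act h (c q) (h [fst q, snd q])" for q
  proof -
    assume "fst q \<in> S" "snd q \<in> S"
    hence "h [fst q, snd q] \<in> M" using H by (simp add: S_def)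
    hence "\<exists>c. letter_rep \<Sigma> act h c (h [fst q, snd q])" using assms(3) by blast
    thus ?thesis unfolding c_def by (rule someI_ex)
  qed
  have c_fix: "fst q \<in> S \<Longrightarrow> snd q \<in> S \<Longrightarrow> bij \<tau> \<Longrightarrow> pact \<tau> q = q \<Longrightarrow> vact \<tau> (c q) = c q"
    for q \<tau>
  proof -
    assume q: "fst q \<in> S" "snd q \<in> S" and bt: "bij \<tau>" and fx: "pact \<tau> q = q"
    obtain as where L: "is_least_supp vact (c q) as" "is_least_supp act (h [fst q, snd q]) as"
      using c_rep[OF q] by (auto simp: letter_rep_def)
    define xs where "xs = atl (fst q) @ atl (snd q)"
    have "supports act xs (h [fst q, snd q])" unfolding supports_def
    proof (intro allI impI)
      fix \<rho> assume f: "fixes_tuple \<rho> xs"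
      hence "vact \<rho> (fst q) = fst q" "vact \<rho> (snd q) = snd q"
        by (auto simp: fixes_tuple_def xs_def vact_fix)
      moreover have "h (map (vact \<rho>) [fst q, snd q]) = act \<rho> (h [fst q, snd q])"
      proof -
        have "set [fst q, snd q] \<subseteq> poly_set \<Sigma>" using q by (simp add: S_def)
        moreover have "bij \<rho>" using f by (simp add: fixes_tuple_def)
        ultimately show ?thesis by (rule Heq[rotated])
      qed
      ultimately show "act \<rho> (h [fst q, snd q]) = h [fst q, snd q]" by simp
    qed
    hence sub: "set as \<subseteq> set xs" using L(2) by (simp add: is_least_supp_def)
    have "\<forall>a\<in>set xs. \<tau> a = a" using fx
      by (auto simp: xs_def pact_def vact_fix prod_eq_iff)
    hence "fixes_tuple \<tau> as" using sub bt by (auto simp: fixes_tuple_def)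
    thus ?thesis using L(1) by (simp add: is_least_supp_def supports_def)
  qed
  have g_any: "fst p \<in> S \<Longrightarrow> snd p \<in> S \<Longrightarrow> bij \<sigma> \<Longrightarrow> p = pact \<sigma> (r p) \<Longrightarrow>
      g p = vact \<sigma> (c (r p))" for p \<sigma>
  proof -
    assume p: "fst p \<in> S" "snd p \<in> S" and bs: "bij \<sigma>" and e: "p = pact \<sigma> (r p)"
    define \<sigma>' where "\<sigma>' = (SOME \<sigma>. bij \<sigma> \<and> p = pact \<sigma> (r p))"
    have s': "bij \<sigma>'" "p = pact \<sigma>' (r p)" using someI_ex[OF rsig[of p]] by (auto simp: \<sigma>'_def)
    define \<tau> where "\<tau> = inv \<sigma>' \<circ> \<sigma>"
    have bt: "bij \<tau>" unfolding \<tau>_def using s' bs by (simp add: bij_comp bij_imp_bij_inv)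
    have ii: "inv \<sigma>' \<circ> \<sigma>' = id" using s' by (simp add: bij_is_inj)
    have "pact \<tau> (r p) = pact (inv \<sigma>') p" unfolding \<tau>_def using e by (metis pact_comp)
    also have "\<dots> = pact (inv \<sigma>' \<circ> \<sigma>') (r p)" using s'(2) by (metis pact_comp)
    also have "\<dots> = r p" using ii by (simp add: pact_def)
    finally have "vact \<tau> (c (r p)) = c (r p)" using c_fix rS p bt by blast
    moreover have "\<sigma>' \<circ> \<tau> = \<sigma>" unfolding \<tau>_def using s'
      by (auto simp: fun_eq_iff bij_is_surj surj_f_inv_f)
    ultimately have "vact \<sigma>' (c (r p)) = vact \<sigma> (c (r p))" by (metis vact_comp)
    thus ?thesis by (simp add: g_def \<sigma>'_def)
  qed
  have g_eq: "fst p \<in> S \<Longrightarrow> snd p \<in> S \<Longrightarrow> \<exists>\<sigma>. bij \<sigma> \<and> p = pact \<sigma> (r p) \<and> g p = vact \<sigma> (c (r p))"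
    for p using rsig[of p] g_any by blast
  show ?thesis
  proof (intro exI[of _ "\<lambda>p. g p"] conjI ballI allI impI)
    fix a b assume ab: "a \<in> poly_set \<Sigma>" "b \<in> poly_set \<Sigma>"
    obtain \<sigma> where s: "bij \<sigma>" "(a,b) = pact \<sigma> (r (a,b))" "g (a,b) = vact \<sigma> (c (r (a,b)))"
      using g_eq[of "(a,b)"] ab by (auto simp: S_def)
    have rs: "fst (r (a,b)) \<in> S" "snd (r (a,b)) \<in> S" using rS[of "(a,b)"] ab by (auto simp: S_def)
    note cr = c_rep[OF rs]
    show "g (a, b) \<in> poly_set \<Sigma>" using s(3) cr by (simp add: letter_rep_def)
    show "letter_rep \<Sigma> act h (g (a, b)) (h [a, b])"
    proof -
      obtain as where L: "is_least_supp vact (c (r (a,b))) as"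
          "is_least_supp act (h [fst (r (a,b)), snd (r (a,b))]) as"
        and h1: "h [c (r (a,b))] = h [fst (r (a,b)), snd (r (a,b))]"
        and cin: "c (r (a,b)) \<in> poly_set \<Sigma>"
        using cr by (auto simp: letter_rep_def)
      have ab': "a = vact \<sigma> (fst (r (a,b)))" "b = vact \<sigma> (snd (r (a,b)))"
        using s(2) by (auto simp: pact_def prod_eq_iff)
      have hab: "h [a,b] = act \<sigma> (h [fst (r (a,b)), snd (r (a,b))])"
      proof -
        have "h [a,b] = h (map (vact \<sigma>) [fst (r (a,b)), snd (r (a,b))])" using ab' by simp
        also have "\<dots> = act \<sigma> (h [fst (r (a,b)), snd (r (a,b))])"
          by (rule Heq) (use s(1) rs in \<open>auto simp: S_def\<close>)
        finally show ?thesis .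
      qed
      have hg: "h [g (a,b)] = act \<sigma> (h [c (r (a,b))])"
      proof -
        have "h [g (a,b)] = h (map (vact \<sigma>) [c (r (a,b))])" using s(3) by simp
        also have "\<dots> = act \<sigma> (h [c (r (a,b))])"
          by (rule Heq) (use s(1) cin in auto)
        finally show ?thesis .
      qed
      show ?thesis unfolding letter_rep_def
        using least_transport[OF vact_action s(1) L(1)] least_transport[OF A s(1) L(2)]
          hab hg h1 s(3) cin by auto
    qed
  next
    fix \<pi> :: "atom \<Rightarrow> atom" and a b assume bp: "bij \<pi>" and ab: "a \<in> poly_set \<Sigma>" "b \<in> poly_set \<Sigma>"
    obtain \<sigma> where s: "bij \<sigma>" "(a,b) = pact \<sigma> (r (a,b))" "g (a,b) = vact \<sigma> (c (r (a,b)))"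
      using g_eq[of "(a,b)"] ab by (auto simp: S_def)
    have pe: "(vact \<pi> a, vact \<pi> b) = pact \<pi> (a,b)" by (simp add: pact_def)
    have rr: "r (pact \<pi> (a,b)) = r (a,b)" using r_shift bp by blast
    have "pact \<pi> (a,b) = pact (\<pi> \<circ> \<sigma>) (r (pact \<pi> (a,b)))" using rr s(2) by (metis pact_comp)
    hence "g (pact \<pi> (a,b)) = vact (\<pi> \<circ> \<sigma>) (c (r (pact \<pi> (a,b))))"
      using g_any ab bp s(1) by (simp add: pact_def S_def bij_comp)
    thus "g (vact \<pi> a, vact \<pi> b) = vact \<pi> (g (a, b))" using pe rr s(3) by (simp add: vact_comp)
  qed
qed

end
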